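(* The profinite completion $\widehat{\mathbb{N}}$ of $(\mathbb{N},+)$ is isomorphic, as a semigroup, to $(\mathbb{N} \cup \widehat{\mathbb{Z}}, \widehat{+})$, where $\mathbb{N}$ and $\widehat{\mathbb{Z}}$ are taken disjoint and $$a \,\widehat{+}\, b = \begin{cases} a + b \in \mathbb{N} & \text{if } a, b \in \mathbb{N},\\ a + b \in \widehat{\mathbb{Z}} & \text{otherwise},\end{cases}$$ where in the second case elements of $\mathbb{N}$ are mapped into $\widehat{\mathbb{Z}}$ by the natural embedding.
   Context: $\mathbb{N} = \{1,2,3,\dots\}$ and $\widehat{\mathbb{Z}} = \varprojlim_n \mathbb{Z}/n\mathbb{Z}$. For positive integers $m, n$, let $\mathbb{Z}_{m,n}$ be the semigroup with underlying set $\{1, \dots, m-1\} \sqcup \mathbb{Z}/n\mathbb{Z}$ and operation $a \dotplus b = a + b \in \{1,\dots,m-1\}$ if $a, b \in \{1,\dots,m-1\}$ and $a+b < m$, and $a \dotplus b = \overline{a+b} \in \mathbb{Z}/n\mathbb{Z}$ otherwise; the quotient map $\pi_{m,n} : \mathbb{N} \to \mathbb{Z}_{m,n}$ sends $a$ to $a$ if $a < m$ and to $\overline{a} \in \mathbb{Z}/n\mathbb{Z}$ if $a \ge m$. (Every finite quotient semigroup of $(\mathbb{N},+)$ is isomorphic to some $\mathbb{Z}_{m,n}$.) If $m \le k$ and $n \mid l$ there is a natural homomorphism $\phi_{(k,l),(m,n)} : \mathbb{Z}_{k,l} \to \mathbb{Z}_{m,n}$ compatible with the quotient maps. The profinite completion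 $\widehat{\mathbb{N}}$ is defined as the projective limit of the system $(\mathbb{Z}_{m,n}, \phi_{(k,l),(m,n)})$. *)

theory Defs
  imports Main
begin

text \<open>An element of Z_{m,n} (m, n >= 1) is represented as Inl a for a in {1..m-1},
  or Inr r for the residue class r mod n, with 0 <= r < n.\<close>

definition zmn_carrier :: "nat \<Rightarrow> nat \<Rightarrow> (nat + nat) set" where
  "zmn_carrier m n = Inl ` {1..<m} \<union> Inr ` {..<n}"

fun zmn_val :: "nat + nat \<Rightarrow> nat" where
  "zmn_val (Inl a) = a"
| "zmn_val (Inr r) = r"

definition zmn_add :: "nat \<Rightarrow> nat \<Rightarrow> nat + nat \<Rightarrow> nat + nat \<Rightarrow> nat + nat" where
  "zmn_add m n a b =
     (case (a, b) of
        (Inl x, Inl y) \<Rightarrow> (if x + y < m then Inl (x + y) else Inr ((x + y) mod n))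
      | _ \<Rightarrow> Inr ((zmn_val a + zmn_val b) mod n))"

definition zmn_pi :: "nat \<Rightarrow> nat \<Rightarrow> nat \<Rightarrow> nat + nat" where
  "zmn_pi m n a = (if a < m then Inl a else Inr (a mod n))"

fun zmn_phi :: "nat \<Rightarrow> nat \<Rightarrow> nat \<Rightarrow> nat \<Rightarrow> nat + nat \<Rightarrow> nat + nat" where
  "zmn_phi k l m n (Inl a) = zmn_pi m n a"
| "zmn_phi k l m n (Inr r) = Inr (r mod n)"

text \<open>Elements are compatible families x m n in Z_{m,n}, indexed by m, n >= 1;
  values at indices outside the index set are fixed to Inl 0.\<close>
definition nhat_carrier :: "(nat \<Rightarrow> nat \<Rightarrow> nat + nat) set" where
  "nhat_carrier = {x.
     (\<forall>m n. (1 \<le> m \<and> 1 \<le> n \<longrightarrow> x m n \<in> zmn_carrier m n) \<and>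
            (\<not> (1 \<le> m \<and> 1 \<le> n) \<longrightarrow> x m n = Inl 0)) \<and>
     (\<forall>m n k l. 1 \<le> m \<longrightarrow> m \<le> k \<longrightarrow> 1 \<le> n \<longrightarrow> 1 \<le> l \<longrightarrow> n dvd l \<longrightarrow>
            x m n = zmn_phi k l m n (x k l))}"

definition nhat_add :: "(nat \<Rightarrow> nat \<Rightarrow> nat + nat) \<Rightarrow> (nat \<Rightarrow> nat \<Rightarrow> nat + nat) \<Rightarrow> (nat \<Rightarrow> nat \<Rightarrow> nat + nat)" where
  "nhat_add x y = (\<lambda>m n. if 1 \<le> m \<and> 1 \<le> n then zmn_add m n (x m n) (y m n) else Inl 0)"

text \<open>Elements are compatible families z n in Z/nZ (represented by 0 <= z n < n), n >= 1;
  z 0 = 0 by convention.\<close>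
definition zhat_carrier :: "(nat \<Rightarrow> nat) set" where
  "zhat_carrier = {z. z 0 = 0 \<and> (\<forall>n. 1 \<le> n \<longrightarrow> z n < n) \<and>
     (\<forall>m n. 1 \<le> m \<longrightarrow> 1 \<le> n \<longrightarrow> m dvd n \<longrightarrow> z m = z n mod m)}"

definition zhat_add :: "(nat \<Rightarrow> nat) \<Rightarrow> (nat \<Rightarrow> nat) \<Rightarrow> (nat \<Rightarrow> nat)" where
  "zhat_add z w = (\<lambda>n. if n = 0 then 0 else (z n + w n) mod n)"

definition zhat_of_nat :: "nat \<Rightarrow> (nat \<Rightarrow> nat)" where
  "zhat_of_nat a = (\<lambda>n. if n = 0 then 0 else a mod n)"

definition nz_carrier :: "(nat + (nat \<Rightarrow> nat)) set" where
  "nz_carrier = Inl ` {1..} \<union> Inr ` zhat_carrier"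

fun nz_to_zhat :: "nat + (nat \<Rightarrow> nat) \<Rightarrow> (nat \<Rightarrow> nat)" where
  "nz_to_zhat (Inl a) = zhat_of_nat a"
| "nz_to_zhat (Inr z) = z"

definition nz_add :: "nat + (nat \<Rightarrow> nat) \<Rightarrow> nat + (nat \<Rightarrow> nat) \<Rightarrow> nat + (nat \<Rightarrow> nat)" where
  "nz_add a b =
     (case (a, b) of
        (Inl x, Inl y) \<Rightarrow> Inl (x + y)
      | _ \<Rightarrow> Inr (zhat_add (nz_to_zhat a) (nz_to_zhat b)))"

end

theory Submission
  imports Defs
begin

definition emb :: "nat + (nat \<Rightarrow> nat) \<Rightarrow> (nat \<Rightarrow> nat \<Rightarrow> nat + nat)" where
  "emb u = (\<lambda>m n. if 1 \<le> m \<and> 1 \<le> n then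
      (case u of Inl a \<Rightarrow> zmn_pi m n a | Inr z \<Rightarrow> Inr (z n)) else Inl 0)"

lemma nh_mem: "x \<in> nhat_carrier \<Longrightarrow> 1 \<le> m \<Longrightarrow> 1 \<le> n \<Longrightarrow> x m n \<in> zmn_carrier m n"
  by (simp add: nhat_carrier_def)

lemma nh_out: "x \<in> nhat_carrier \<Longrightarrow> \<not> (1 \<le> m \<and> 1 \<le> n) \<Longrightarrow> x m n = Inl 0"
  by (simp add: nhat_carrier_def)

lemma nh_comp: "x \<in> nhat_carrier \<Longrightarrow> 1 \<le> m \<Longrightarrow> m \<le> k \<Longrightarrow> 1 \<le> n \<Longrightarrow> 1 \<le> l \<Longrightarrow> n dvd l
  \<Longrightarrow> x m n = zmn_phi k l m n (x k l)"
  unfolding nhat_carrier_def by blast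

lemma zh_of_nat: "zhat_of_nat a \<in> zhat_carrier"
  by (auto simp: zhat_carrier_def zhat_of_nat_def mod_mod_cancel)

lemma zh_add: "z \<in> zhat_carrier \<Longrightarrow> w \<in> zhat_carrier \<Longrightarrow> zhat_add z w \<in> zhat_carrier"
proof -
  assume z: "z \<in> zhat_carrier" and w: "w \<in> zhat_carrier"
  have "(z m + w m) mod m = ((z n + w n) mod n) mod m"
    if "1 \<le> m" "1 \<le> n" "m dvd n" for m n
  proof -
    have "z m = z n mod m" "w m = w n mod m" using z w that unfolding zhat_carrier_def by blast+
    then have "(z m + w m) mod m = (z n + w n) mod m" by (simp add: mod_add_eq)
    also have "\<dots> = ((z n + w n) mod n) mod m" using that(3) by (simp add: mod_mod_cancel)
    finally show ?thesis .
  qed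
  note h = this
  show ?thesis unfolding zhat_carrier_def
  proof (intro CollectI conjI allI impI)
    show "zhat_add z w 0 = 0" by (simp add: zhat_add_def)
  next
    fix n :: nat assume "1 \<le> n" then show "zhat_add z w n < n" by (simp add: zhat_add_def)
  next
    fix m n :: nat assume a: "1 \<le> m" "1 \<le> n" "m dvd n"
    then show "zhat_add z w m = zhat_add z w n mod m"
      unfolding zhat_add_def using h[OF a] by simp
  qed
qed

lemma nz_to_zh: "u \<in> nz_carrier \<Longrightarrow> nz_to_zhat u \<in> zhat_carrier"
  by (auto simp: nz_carrier_def zh_of_nat)

lemma nz_add_closed: "u \<in> nz_carrier \<Longrightarrow> v \<in> nz_carrier \<Longrightarrow> nz_add u v \<in> nz_carrier"
proof -
  assume u: "u \<in> nz_carrier" and v: "v \<in> nz_carrier"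
  show ?thesis
  proof (cases "\<exists>a b. u = Inl a \<and> v = Inl b")
    case True
    then obtain a b where "u = Inl a" "v = Inl b" by blast
    then show ?thesis using u v by (auto simp: nz_carrier_def nz_add_def)
  next
    case False
    then have "nz_add u v = Inr (zhat_add (nz_to_zhat u) (nz_to_zhat v))"
      by (cases u; cases v; auto simp: nz_add_def)
    then show ?thesis using zh_add[OF nz_to_zh[OF u] nz_to_zh[OF v]]
      by (simp add: nz_carrier_def)
  qed
qed

lemma emb_in: "u \<in> nz_carrier \<Longrightarrow> emb u \<in> nhat_carrier"
proof -
  assume u: "u \<in> nz_carrier"
  show ?thesis
  proof (cases u)
    case (Inl a)
    with u have a: "1 \<le> a" by (auto simp: nz_carrier_def)
    show ?thesis unfolding nhat_carrier_def emb_def Inl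
      using a by (auto simp: zmn_pi_def zmn_carrier_def mod_mod_cancel)
  next
    case (Inr z)
    with u have z: "z \<in> zhat_carrier" by (auto simp: nz_carrier_def)
    have zlt: "\<And>n. 1 \<le> n \<Longrightarrow> z n < n" using z unfolding zhat_carrier_def by blast
    have zc: "\<And>n l. 1 \<le> n \<Longrightarrow> 1 \<le> l \<Longrightarrow> n dvd l \<Longrightarrow> z n = z l mod n"
      using z unfolding zhat_carrier_def by blast
    show ?thesis unfolding nhat_carrier_def emb_def Inr
    proof (intro CollectI conjI allI impI)
      fix m n :: nat assume "1 \<le> m \<and> 1 \<le> n"
      then show "(if 1 \<le> m \<and> 1 \<le> n then case Inr z of Inl a \<Rightarrow> zmn_pi m n a | Inr z \<Rightarrow> Inr (z n) else Inl 0) \<in> zmn_carrier m n"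
        using zlt[of n] by (simp add: zmn_carrier_def)
    next
      fix m n :: nat assume "\<not> (1 \<le> m \<and> 1 \<le> n)"
      then show "(if 1 \<le> m \<and> 1 \<le> n then case Inr z of Inl a \<Rightarrow> zmn_pi m n a | Inr z \<Rightarrow> Inr (z n) else Inl 0) = Inl 0"
        by simp
    next
      fix m n k l :: nat assume h: "1 \<le> m" "m \<le> k" "1 \<le> n" "1 \<le> l" "n dvd l"
      have "z n = z l mod n" by (rule zc) (use h in auto)
      then show "(if 1 \<le> m \<and> 1 \<le> n then case Inr z of Inl a \<Rightarrow> zmn_pi m n a | Inr z \<Rightarrow> Inr (z n) else Inl 0) =
         zmn_phi k l m n (if 1 \<le> k \<and> 1 \<le> l then case Inr z of Inl a \<Rightarrow> zmn_pi k l a | Inr z \<Rightarrow> Inr (z l) else Inl 0)"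
        using h by simp
    qed
  qed
qed

lemma emb_inj: "inj_on emb nz_carrier"
proof (rule inj_onI)
  fix u v assume u: "u \<in> nz_carrier" and v: "v \<in> nz_carrier" and e: "emb u = emb v"
  have e2: "\<And>m n. emb u m n = emb v m n" using e by simp
  show "u = v"
  proof (cases u)
    case (Inl a)
    show ?thesis
    proof (cases v)
      case (Inl b)
      have "emb u (a+b+1) 1 = emb v (a+b+1) 1" using e2 by simp
      then show ?thesis using \<open>u = Inl a\<close> Inl by (simp add: emb_def zmn_pi_def)
    next
      case (Inr w)
      have "emb u (a+1) 1 = emb v (a+1) 1" using e2 by simp
      then show ?thesis using \<open>u = Inl a\<close> Inr by (simp add: emb_def zmn_pi_def)
    qed
  next
    case (Inr z)
    show ?thesis
    proof (cases v)
      case (Inl b)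
      have "emb u (b+1) 1 = emb v (b+1) 1" using e2 by simp
      then show ?thesis using \<open>u = Inr z\<close> Inl by (simp add: emb_def zmn_pi_def)
    next
      case (Inr w)
      have z: "z \<in> zhat_carrier" and w: "w \<in> zhat_carrier"
        using u v \<open>u = Inr z\<close> Inr by (auto simp: nz_carrier_def)
      have "z n = w n" for n
      proof (cases "n = 0")
        case True
        have "z 0 = 0" "w 0 = 0" using z w unfolding zhat_carrier_def by blast+
        then show ?thesis using True by simp
      next
        case False
        have "emb u 1 n = emb v 1 n" using e2 by simp
        then show ?thesis using \<open>u = Inr z\<close> Inr False by (simp add: emb_def)
      qed
      then show ?thesis using \<open>u = Inr z\<close> Inr by auto
    qed
  qed
qed

lemma emb_surj: "x \<in> nhat_carrier \<Longrightarrow> \<exists>u\<in>nz_carrier. x = emb u"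
proof -
  assume x: "x \<in> nhat_carrier"
  show ?thesis
  proof (cases "\<exists>k l a. 1 \<le> k \<and> 1 \<le> l \<and> x k l = Inl a")
    case True
    then obtain k l a where k: "1 \<le> k" and l: "1 \<le> l" and xa: "x k l = Inl a" by blast
    have a: "1 \<le> a" "a < k" using nh_mem[OF x k l] xa by (auto simp: zmn_carrier_def)
    have "x = emb (Inl a)"
    proof (intro ext)
      fix m n
      show "x m n = emb (Inl a) m n"
      proof (cases "1 \<le> m \<and> 1 \<le> n")
        case False
        have "x m n = Inl 0" using nh_out[OF x False] .
        then show ?thesis using False unfolding emb_def by auto
      next
        case True
        define K where "K = max k m"
        define L where "L = l * n"
        have L: "1 \<le> L" using l True by (simp add: L_def)
        have c1: "x k l = zmn_phi K L k l (x K L)"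
          by (rule nh_comp[OF x k]) (use k l L in \<open>auto simp: K_def L_def\<close>)
        have c2: "x m n = zmn_phi K L m n (x K L)"
          by (rule nh_comp[OF x]) (use True L in \<open>auto simp: K_def L_def\<close>)
        show ?thesis
        proof (cases "x K L")
          case (Inl b)
          then have "zmn_pi k l b = Inl a" using c1 xa by simp
          then have "b = a" by (simp add: zmn_pi_def split: if_splits)
          then show ?thesis using c2 Inl True by (simp add: emb_def)
        next
          case (Inr r) then show ?thesis using c1 xa by simp
        qed
      qed
    qed
    then show ?thesis using a by (auto simp: nz_carrier_def)
  next
    case False
    define z where "z n = (if n = 0 then 0 else zmn_val (x 1 n))" for n
    have xr: "\<exists>r. x m n = Inr r \<and> r < n" if "1 \<le> m" "1 \<le> n" for m n
    proof -
      have "x m n \<in> zmn_carrier m n" using nh_mem[OF x that] .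
      then show ?thesis using False that by (auto simp: zmn_carrier_def)
    qed
    have xz: "x m n = Inr (z n)" if m: "1 \<le> m" and n: "1 \<le> n" for m n
    proof -
      obtain r where r: "x m n = Inr r" "r < n" using xr[OF m n] by blast
      have "x 1 n = zmn_phi m n 1 n (x m n)" by (rule nh_comp[OF x]) (use m n in auto)
      then have "x 1 n = Inr r" using r by simp
      then show ?thesis using r n by (simp add: z_def)
    qed
    have zc: "z \<in> zhat_carrier"
      unfolding zhat_carrier_def
    proof (intro CollectI conjI allI impI)
      show "z 0 = 0" by (simp add: z_def)
    next
      fix n :: nat assume n: "1 \<le> n"
      then show "z n < n" using xr[of 1 n] by (auto simp: z_def)
    next
      fix m n :: nat assume m: "1 \<le> m" and n: "1 \<le> n" and d: "m dvd n"
      have "x 1 m = zmn_phi 1 n 1 m (x 1 n)" by (rule nh_comp[OF x]) (use m n d in auto)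
      then show "z m = z n mod m" using xz[of 1 m] xz[of 1 n] m n by simp
    qed
    have "x = emb (Inr z)"
    proof (intro ext)
      fix m n
      show "x m n = emb (Inr z) m n"
        using nh_out[OF x, of m n] xz[of m n] by (auto simp: emb_def)
    qed
    then show ?thesis using zc by (auto simp: nz_carrier_def)
  qed
qed

lemma val_pi: "1 \<le> n \<Longrightarrow> zmn_val (zmn_pi m n a) mod n = a mod n"
  by (simp add: zmn_pi_def)

lemma add_inr2: "zmn_add m n u (Inr r) = Inr ((zmn_val u + r) mod n)"
  by (cases u) (auto simp: zmn_add_def)

lemma add_inr1: "zmn_add m n (Inr r) u = Inr ((r + zmn_val u) mod n)"
  by (cases u) (auto simp: zmn_add_def)

lemma emb_hom: "u \<in> nz_carrier \<Longrightarrow> v \<in> nz_carrier \<Longrightarrow> emb (nz_add u v) = nhat_add (emb u) (emb v)"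
proof (intro ext)
  fix m n
  assume u: "u \<in> nz_carrier" and v: "v \<in> nz_carrier"
  show "emb (nz_add u v) m n = nhat_add (emb u) (emb v) m n"
  proof (cases "1 \<le> m \<and> 1 \<le> n")
    case False then show ?thesis unfolding emb_def nhat_add_def by auto
  next
    case True
    then have m: "1 \<le> m" and n: "1 \<le> n" by auto
    show ?thesis
    proof (cases u)
      case (Inl a)
      show ?thesis
      proof (cases v)
        case (Inl b)
        show ?thesis using True \<open>u = Inl a\<close> Inl
          by (auto simp: emb_def nhat_add_def nz_add_def zmn_pi_def zmn_add_def mod_add_eq
              mod_add_left_eq mod_add_right_eq)
      next
        case (Inr w)
        have "(zmn_val (zmn_pi m n a) + w n) mod n = (a mod n + w n) mod n"
          using val_pi[OF n, of m a] by (metis mod_add_left_eq)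
        then show ?thesis using True \<open>u = Inl a\<close> Inr
          by (simp add: emb_def nhat_add_def nz_add_def add_inr2 zhat_add_def zhat_of_nat_def)
      qed
    next
      case (Inr z)
      show ?thesis
      proof (cases v)
        case (Inl b)
        have "(z n + zmn_val (zmn_pi m n b)) mod n = (z n + b mod n) mod n"
          using val_pi[OF n, of m b] by (metis mod_add_right_eq)
        then show ?thesis using True \<open>u = Inr z\<close> Inl
          by (simp add: emb_def nhat_add_def nz_add_def add_inr1 zhat_add_def zhat_of_nat_def)
      next
        case (Inr w)
        show ?thesis using True \<open>u = Inr z\<close> Inr
          by (simp add: emb_def nhat_add_def nz_add_def add_inr1 zhat_add_def)
      qed
    qed
  qed
qed

lemma emb_bij: "bij_betw emb nz_carrier nhat_carrier"
  unfolding bij_betw_def using emb_inj emb_in emb_surj by blast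

theorem proposition2p1:
  shows "\<exists>f. bij_betw f nhat_carrier nz_carrier \<and>
           (\<forall>x\<in>nhat_carrier. \<forall>y\<in>nhat_carrier. f (nhat_add x y) = nz_add (f x) (f y))"
proof (intro exI conjI ballI)
  let ?f = "inv_into nz_carrier emb"
  show "bij_betw ?f nhat_carrier nz_carrier" using bij_betw_inv_into[OF emb_bij] .
  fix x y assume x: "x \<in> nhat_carrier" and y: "y \<in> nhat_carrier"
  obtain u where u: "u \<in> nz_carrier" "x = emb u" using emb_surj[OF x] by blast
  obtain v where v: "v \<in> nz_carrier" "y = emb v" using emb_surj[OF y] by blast
  have "nhat_add x y = emb (nz_add u v)" using emb_hom[OF u(1) v(1)] u v by simp
  then show "?f (nhat_add x y) = nz_add (?f x) (?f y)"
    using u v nz_add_closed[OF u(1) v(1)] inv_into_f_f[OF emb_inj] by simp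
qed

end
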